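(* For every $n\ge1$, the local $h^\ast$-polynomial $\ell^\ast(\Delta_n^!;z)$ of the factoradic $n$-simplex is $\gamma$-nonnegative: there are nonnegative numbers $\gamma_i$ with $\ell^\ast(\Delta_n^!;z)=\sum_{i=0}^{\lfloor (n+1)/2\rfloor}\gamma_i z^i(1+z)^{n+1-2i}$.
   Context: Let $b_{m,k}$ be the number of permutations $\pi\in\mathfrak{S}_m$ whose largest descent position (largest $i$ with $\pi_i>\pi_{i+1}$; $0$ for the identity) equals $k$. The factoradic $n$-simplex is $\Delta_n^!:=\operatorname{conv}\bigl(e^{(1)},\ldots,e^{(n)},-\sum_{k=1}^n b_{n+1,k}e^{(k)}\bigr)\subset\mathbb{R}^n$. For a lattice simplex $\Delta=\operatorname{conv}(v^{(0)},\ldots,v^{(d)})\subset\mathbb{R}^n$, $\ell^\ast(\Delta;z):=\sum_{x\in\Pi^\circ_\Delta\cap\mathbb{Z}^{n+1}}z^{x_{n+1}}$, where $\Pi^\circ_\Delta:=\{\sum_{i=0}^d\lambda_i(v^{(i)},1):0<\lambda_i<1\}$; for a $d$-simplex this polynomial is symmetric with respect to $d+1$. *)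

theory Defs
  imports "HOL-Combinatorics.Permutations" "HOL-Computational_Algebra.Polynomial"
begin

definition last_descent :: "nat \<Rightarrow> (nat \<Rightarrow> nat) \<Rightarrow> nat" where
  "last_descent m \<pi> = Max ({i \<in> {1..<m}. \<pi> i > \<pi> (Suc i)} \<union> {0})"

definition bnum :: "nat \<Rightarrow> nat \<Rightarrow> nat" where
  "bnum m k = card {\<pi>. \<pi> permutes {1..m} \<and> last_descent m \<pi> = k}"

text \<open>Points of R^n are functions nat \<Rightarrow> _ with coordinates indexed by 1..n
  (values outside {1..n} are irrelevant / zero).  A lattice simplex with
  vertices v 0, ..., v d is given by v :: nat \<Rightarrow> nat \<Rightarrow> int.\<close>

text \<open>Lattice points of the open fundamental parallelepiped Pi-open in Z^{n+1}: pairs (y, h)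
  where y gives the first n coordinates and h is the (n+1)-st coordinate.\<close>
definition par_lattice_points ::
  "nat \<Rightarrow> nat \<Rightarrow> (nat \<Rightarrow> nat \<Rightarrow> int) \<Rightarrow> ((nat \<Rightarrow> int) \<times> int) set" where
  "par_lattice_points d n v =
     {(y, h). (\<forall>j. j \<notin> {1..n} \<longrightarrow> y j = 0) \<and>
        (\<exists>c :: nat \<Rightarrow> real. (\<forall>i\<le>d. 0 < c i \<and> c i < 1) \<and>
           (\<forall>j\<in>{1..n}. real_of_int (y j) = (\<Sum>i\<le>d. c i * real_of_int (v i j))) \<and>
           real_of_int h = (\<Sum>i\<le>d. c i))}"

definition ell_star :: "nat \<Rightarrow> nat \<Rightarrow> (nat \<Rightarrow> nat \<Rightarrow> int) \<Rightarrow> real poly" where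
  "ell_star d n v = (\<Sum>x\<in>par_lattice_points d n v. monom 1 (nat (snd x)))"

text \<open>Factoradic n-simplex: vertices e^(1),...,e^(n), and -\<Sum>k b_{n+1,k} e^(k).
  We index them v 0 = the last vertex, v i = e^(i) for 1 \<le> i \<le> n.\<close>
definition factoradic_vertices :: "nat \<Rightarrow> nat \<Rightarrow> nat \<Rightarrow> int" where
  "factoradic_vertices n i j =
     (if i = 0 then (if j \<in> {1..n} then - int (bnum (Suc n) j) else 0)
      else if i = j \<and> j \<in> {1..n} then 1 else 0)"

end

theory Submission
  imports Defs
begin


definition gpos :: "nat \<Rightarrow> real poly \<Rightarrow> bool" where
  "gpos d p \<longleftrightarrow> (\<exists>\<gamma>::nat\<Rightarrow>real. (\<forall>i. \<gamma> i \<ge> 0) \<and>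
      p = (\<Sum>i\<le>d div 2. smult (\<gamma> i) (monom 1 i * [:1, 1:] ^ (d - 2 * i))))"

lemma smult_sum_r: "smult c (sum f A) = (\<Sum>i\<in>A. smult c (f i))"
  by (induction A rule: infinite_finite_induct) (auto simp: smult_add_right)

lemma monom_Suc1: "monom (1::real) (Suc i) * q = monom 1 1 * (monom 1 i * q)"
  by (simp add: mult_monom mult.assoc[symmetric])

lemma gpos_add: "gpos d p \<Longrightarrow> gpos d q \<Longrightarrow> gpos d (p + q)"
  unfolding gpos_def
proof (elim exE conjE)
  fix g1 g2 assume "\<forall>i. g1 i \<ge> 0" "\<forall>i. g2 i \<ge> 0"
    "p = (\<Sum>i\<le>d div 2. smult (g1 i) (monom 1 i * [:1, 1:] ^ (d - 2 * i)))"
    "q = (\<Sum>i\<le>d div 2. smult (g2 i) (monom 1 i * [:1, 1:] ^ (d - 2 * i)))"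
  then show "\<exists>\<gamma>. (\<forall>i. 0 \<le> \<gamma> i) \<and> p + q = (\<Sum>i\<le>d div 2. smult (\<gamma> i) (monom 1 i * [:1, 1:] ^ (d - 2 * i)))"
    by (intro exI[of _ "\<lambda>i. g1 i + g2 i"]) (auto simp: sum.distrib[symmetric] smult_add_left add_nonneg_nonneg)
qed

lemma gpos_smult: "gpos d p \<Longrightarrow> c \<ge> 0 \<Longrightarrow> gpos d (smult c p)"
  unfolding gpos_def
proof (elim exE conjE)
  fix g assume "\<forall>i. g i \<ge> 0" "c \<ge> 0"
    "p = (\<Sum>i\<le>d div 2. smult (g i) (monom 1 i * [:1, 1:] ^ (d - 2 * i)))"
  then show "\<exists>\<gamma>. (\<forall>i. 0 \<le> \<gamma> i) \<and> smult c p = (\<Sum>i\<le>d div 2. smult (\<gamma> i) (monom 1 i * [:1, 1:] ^ (d - 2 * i)))"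
    by (intro exI[of _ "\<lambda>i. c * g i"]) (auto simp: smult_sum_r)
qed

lemma gpos_zero: "gpos d 0"
  unfolding gpos_def by (intro exI[of _ "\<lambda>i. 0"]) auto

lemma gpos_sum: "finite A \<Longrightarrow> (\<And>a. a \<in> A \<Longrightarrow> gpos d (f a)) \<Longrightarrow> gpos d (\<Sum>a\<in>A. f a)"
  by (induction A rule: finite_induct) (auto intro: gpos_add gpos_zero)

lemma gpos_mult_z: assumes "gpos d p" shows "gpos (d + 2) (monom 1 1 * p)"
proof -
  from assms obtain g where g: "\<forall>i. g i \<ge> 0"
    "p = (\<Sum>i\<le>d div 2. smult (g i) (monom 1 i * [:1, 1:] ^ (d - 2 * i)))"
    unfolding gpos_def by blast
  define g' where "g' i = (if i = 0 then 0 else g (i - 1))" for i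
  have "(\<Sum>i\<le>(d+2) div 2. smult (g' i) (monom 1 i * [:1, 1:] ^ (d + 2 - 2 * i)))
      = (\<Sum>i\<le>d div 2. smult (g' (Suc i)) (monom 1 (Suc i) * [:1, 1:] ^ (d + 2 - 2 * Suc i)))"
  proof -
    have e: "(d+2) div 2 = Suc (d div 2)" by simp
    show ?thesis unfolding e sum.atMost_Suc_shift by (simp add: g'_def)
  qed
  also have "\<dots> = (\<Sum>i\<le>d div 2. monom 1 1 * smult (g i) (monom 1 i * [:1, 1:] ^ (d - 2 * i)))"
    by (rule sum.cong) (simp_all only: g'_def monom_Suc1 mult_smult_right, simp)
  also have "\<dots> = monom 1 1 * p"
    by (simp add: g(2) sum_distrib_left)
  finally show ?thesis unfolding gpos_def using g(1) by (intro exI[of _ g']) (auto simp: g'_def)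
qed

lemma gpos_mult_1z: assumes "gpos d p" shows "gpos (d + 1) ([:1,1:] * p)"
proof -
  from assms obtain g where g: "\<forall>i. g i \<ge> 0"
    "p = (\<Sum>i\<le>d div 2. smult (g i) (monom 1 i * [:1, 1:] ^ (d - 2 * i)))"
    unfolding gpos_def by blast
  define g' where "g' i = (if i \<le> d div 2 then g i else 0)" for i
  have "(\<Sum>i\<le>(d+1) div 2. smult (g' i) (monom 1 i * [:1, 1:] ^ (d + 1 - 2 * i)))
      = (\<Sum>i\<le>d div 2. smult (g' i) (monom 1 i * [:1, 1:] ^ (d + 1 - 2 * i)))"
    by (rule sum.mono_neutral_right) (auto simp: g'_def)
  also have "\<dots> = (\<Sum>i\<le>d div 2. [:1,1:] * smult (g i) (monom 1 i * [:1, 1:] ^ (d - 2 * i)))"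
  proof (rule sum.cong)
    fix i assume "i \<in> {..d div 2}"
    then have "d + 1 - 2 * i = Suc (d - 2*i)" by auto
    then show "smult (g' i) (monom 1 i * [:1, 1:] ^ (d + 1 - 2 * i)) = [:1,1:] * smult (g i) (monom 1 i * [:1, 1:] ^ (d - 2 * i))"
      using \<open>i \<in> _\<close> by (simp add: g'_def mult_smult_right algebra_simps)
  qed simp
  also have "\<dots> = [:1,1:] * p" by (simp add: g(2) sum_distrib_left)
  finally show ?thesis unfolding gpos_def using g(1) by (intro exI[of _ g']) (auto simp: g'_def)
qed

lemma gpos_one_plus_z: "gpos 1 [:1,1:]"
  unfolding gpos_def by (intro exI[of _ "\<lambda>i. 1"]) auto

lemma gpos_const: "c \<ge> 0 \<Longrightarrow> gpos 0 [:c:]"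
  unfolding gpos_def by (intro exI[of _ "\<lambda>i. c"]) (auto simp: monom_0)




definition Dset :: "nat \<Rightarrow> nat \<Rightarrow> (nat \<Rightarrow> nat) set" where
  "Dset m k = {\<pi>. \<pi> permutes {1..m} \<and> (\<forall>i. k < i \<and> i < m \<longrightarrow> \<pi> i < \<pi> (Suc i))}"

lemma tail_mono:
  assumes "\<forall>i. k < i \<and> i < m \<longrightarrow> \<pi> i < \<pi> (Suc i)" "k < a" "a < b" "b \<le> m"
  shows "\<pi> a < (\<pi> b :: nat)"
  using assms(3,4)
proof (induction b)
  case 0 then show ?case by simp
next
  case (Suc b)
  show ?case
  proof (cases "a = b")
    case True then show ?thesis using assms Suc by auto
  next
    case False
    then have "\<pi> a < \<pi> b" using Suc by auto
    also have "\<pi> b < \<pi> (Suc b)" using assms Suc False by auto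
    finally show ?thesis .
  qed
qed

definition Psi :: "nat \<Rightarrow> nat list \<Rightarrow> nat \<Rightarrow> nat" where
  "Psi m xs = (\<lambda>i. if i \<in> {1..m} then (xs @ sorted_list_of_set ({1..m} - set xs)) ! (i - 1) else i)"

lemma Psi_props:
  assumes xs: "length xs = k" "distinct xs" "set xs \<subseteq> {1..m}"
  shows "Psi m xs \<in> Dset m k" "map (Psi m xs) [1..<Suc k] = xs"
proof -
  define zs where "zs = sorted_list_of_set ({1..m} - set xs)"
  define ys where "ys = xs @ zs"
  have km: "k \<le> m" using xs card_mono[OF _ xs(3)] distinct_card[OF xs(2)] by fastforce
  have zs: "sorted_wrt (<) zs" "set zs = {1..m} - set xs" "length zs = m - k"
    using xs km by (auto simp: zs_def strict_sorted_iff card_Diff_subset distinct_card)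
  have ys: "distinct ys" "set ys = {1..m}" "length ys = m"
    using xs zs km by (auto simp: ys_def strict_sorted_iff)
  have P: "Psi m xs = (\<lambda>i. if i \<in> {1..m} then ys ! (i - 1) else i)"
    unfolding Psi_def ys_def zs_def by (rule refl)
  have b1: "bij_betw (\<lambda>i. i - 1) {1..m} {..<m}"
    by (rule bij_betw_byWitness[where f'="\<lambda>i. Suc i"]) auto
  have b2: "bij_betw ((!) ys) {..<m} {1..m}"
    using ys by (intro bij_betw_nth) auto
  have "bij_betw (\<lambda>i. ys ! (i - 1)) {1..m} {1..m}"
    using bij_betw_trans[OF b1 b2] by (simp add: comp_def)
  then have "bij_betw (Psi m xs) {1..m} {1..m}"
    by (rule bij_betw_cong[THEN iffD1, rotated]) (simp add: P)
  then have perm: "Psi m xs permutes {1..m}"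
    by (rule bij_imp_permutes) (auto simp: P)
  have inc: "Psi m xs i < Psi m xs (Suc i)" if i: "k < i" "i < m" for i
  proof -
    have "Psi m xs i = zs ! (i - 1 - k)" "Psi m xs (Suc i) = zs ! (i - k)"
      using i xs by (auto simp: P ys_def nth_append)
    moreover have "zs ! (i - 1 - k) < zs ! (i - k)"
      using i zs by (intro sorted_wrt_nth_less[OF zs(1)]) auto
    ultimately show ?thesis by simp
  qed
  show "Psi m xs \<in> Dset m k" using perm inc by (simp add: Dset_def)
  show "map (Psi m xs) [1..<Suc k] = xs"
  proof (rule nth_equalityI)
    show "length (map (Psi m xs) [1..<Suc k]) = length xs" using xs by simp
    fix i assume "i < length (map (Psi m xs) [1..<Suc k])"
    then have i: "i < k" by (simp del: upt_Suc)
    have "map (Psi m xs) [1..<Suc k] ! i = Psi m xs (Suc i)" using i by (simp del: upt_Suc)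
    also have "\<dots> = ys ! i" using i km by (simp add: P)
    also have "\<dots> = xs ! i" using i xs by (simp add: ys_def nth_append)
    finally show "map (Psi m xs) [1..<Suc k] ! i = xs ! i" .
  qed
qed

lemma Phi_props:
  assumes p: "\<pi> \<in> Dset m k" and km: "k \<le> m"
  shows "length (map \<pi> [1..<Suc k]) = k" "distinct (map \<pi> [1..<Suc k])" "set (map \<pi> [1..<Suc k]) \<subseteq> {1..m}"
    "Psi m (map \<pi> [1..<Suc k]) = \<pi>"
proof -
  have perm: "\<pi> permutes {1..m}" and tail: "\<forall>i. k < i \<and> i < m \<longrightarrow> \<pi> i < \<pi> (Suc i)"
    using p by (auto simp: Dset_def)
  have inj: "inj_on \<pi> X" for X using permutes_inj[OF perm] by (rule inj_on_subset) simp
  have img: "\<pi> ` {1..m} = {1..m}" using permutes_image[OF perm] .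
  show "length (map \<pi> [1..<Suc k]) = k" by simp
  show "distinct (map \<pi> [1..<Suc k])" by (simp add: distinct_map inj)
  have "set (map \<pi> [1..<Suc k]) = \<pi> ` {1..k}" by auto
  also have "\<dots> \<subseteq> \<pi> ` {1..m}" by (rule image_mono) (use km in auto)
  finally show "set (map \<pi> [1..<Suc k]) \<subseteq> {1..m}" using img by simp
  define xs where "xs = map \<pi> [1..<Suc k]"
  have sx: "set xs = \<pi> ` {1..k}" by (auto simp: xs_def)
  have tl: "sorted_list_of_set ({1..m} - set xs) = map \<pi> [Suc k..<Suc m]"
  proof (rule sorted_distinct_set_unique)
    have "sorted_wrt (<) (map \<pi> [Suc k..<Suc m])"
      by (rule sorted_wrt_map_mono[OF sorted_wrt_upt]) (use tail in \<open>auto intro: tail_mono\<close>)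
    then show "sorted (map \<pi> [Suc k..<Suc m])" "distinct (map \<pi> [Suc k..<Suc m])"
      by (auto simp: strict_sorted_iff)
    have "{1..m} - \<pi> ` {1..k} = \<pi> ` {1..m} - \<pi> ` {1..k}" using img by simp
    also have "\<dots> = \<pi> ` ({1..m} - {1..k})" by (rule inj_on_image_set_diff[symmetric, OF inj]) (use km in auto)
    also have "{1..m} - {1..k} = {Suc k..m}" by auto
    finally show "set (sorted_list_of_set ({1..m} - set xs)) = set (map \<pi> [Suc k..<Suc m])"
      unfolding sx by (simp del: upt_Suc add: atLeastLessThanSuc_atLeastAtMost)
  qed auto
  have ys: "xs @ map \<pi> [Suc k..<Suc m] = map \<pi> [1..<Suc m]"
  proof -
    have "[1..<Suc m] = [1..<Suc k] @ [Suc k..<Suc m]" using km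
      using upt_add_eq_append[of 1 "Suc k" "m - k"] by (simp del: upt_Suc)
    then show ?thesis by (simp add: xs_def del: upt_Suc)
  qed
  show "Psi m xs = \<pi>"
  proof
    fix i show "Psi m xs i = \<pi> i"
    proof (cases "i \<in> {1..m}")
      case True
      then have "i - 1 < length [1..<Suc m]" by auto
      then show ?thesis unfolding Psi_def tl ys using True by (simp del: upt_Suc add: nth_map)
    next
      case False
      then show ?thesis using permutes_not_in[OF perm False] unfolding Psi_def by auto
    qed
  qed
qed

lemma card_Dset:
  assumes "k \<le> m"
  shows "card (Dset m k) = fact m div fact (m - k)"
proof -
  define L where "L = {xs. length xs = k \<and> distinct xs \<and> set xs \<subseteq> {1..m}}"
  have "bij_betw (\<lambda>\<pi>. map \<pi> [1..<Suc k]) (Dset m k) L"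
  proof (rule bij_betw_byWitness[where f'="Psi m"])
    show "\<forall>a\<in>Dset m k. Psi m (map a [1..<Suc k]) = a" using Phi_props assms by blast
    show "\<forall>a'\<in>L. map (Psi m a') [1..<Suc k] = a'" using Psi_props by (auto simp: L_def)
    show "(\<lambda>\<pi>. map \<pi> [1..<Suc k]) ` Dset m k \<subseteq> L"
      unfolding L_def image_subset_iff mem_Collect_eq using Phi_props(1,2,3)[OF _ assms] by blast
    show "Psi m ` L \<subseteq> Dset m k" using Psi_props by (auto simp: L_def)
  qed
  then have "card (Dset m k) = card L" by (rule bij_betw_same_card)
  also have "\<dots> = \<Prod>{m - k + 1..m}"
    unfolding L_def using card_lists_distinct_length_eq[of "{1..m}" k] assms by simp
  also have "\<dots> = fact m div fact (m - k)" using fact_div_fact[of "m - k" m] by simp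
  finally show ?thesis .
qed

lemma ld_le:
  assumes "\<pi> permutes {1..m}"
  shows "last_descent m \<pi> \<le> k \<longleftrightarrow> (\<forall>i. k < i \<and> i < m \<longrightarrow> \<pi> i < \<pi> (Suc i))"
proof -
  have inj: "\<pi> i \<noteq> \<pi> (Suc i)" for i using permutes_inj[OF assms] by (metis inj_eq n_not_Suc_n)
  have "last_descent m \<pi> \<le> k \<longleftrightarrow> (\<forall>x\<in>{i \<in> {1..<m}. \<pi> i > \<pi> (Suc i)} \<union> {0}. x \<le> k)"
    unfolding last_descent_def by (rule Max_le_iff) auto
  also have "\<dots> \<longleftrightarrow> (\<forall>i. k < i \<and> i < m \<longrightarrow> \<pi> i < \<pi> (Suc i))"
  proof (intro iffI allI impI)
    fix i assume H: "\<forall>x\<in>{i \<in> {1..<m}. \<pi> i > \<pi> (Suc i)} \<union> {0}. x \<le> k" and i: "k < i \<and> i < m"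
    show "\<pi> i < \<pi> (Suc i)"
    proof (rule ccontr)
      assume "\<not> \<pi> i < \<pi> (Suc i)"
      then have "\<pi> i > \<pi> (Suc i)" using inj[of i] by linarith
      then have "i \<le> k" using H i by auto
      then show False using i by simp
    qed
  next
    assume H: "\<forall>i. k < i \<and> i < m \<longrightarrow> \<pi> i < \<pi> (Suc i)"
    show "\<forall>x\<in>{i \<in> {1..<m}. \<pi> i > \<pi> (Suc i)} \<union> {0}. x \<le> k"
    proof
      fix x assume x: "x \<in> {i \<in> {1..<m}. \<pi> i > \<pi> (Suc i)} \<union> {0}"
      show "x \<le> k"
      proof (rule ccontr)
        assume "\<not> x \<le> k"
        then have "\<pi> x < \<pi> (Suc x)" "x \<noteq> 0" using H x by auto
        then show False using x by auto
      qed
    qed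
  qed
  finally show ?thesis .
qed

lemma bnum_formula0:
  assumes "1 \<le> k" "k \<le> m"
  shows "int (bnum m k) = int (fact m div fact (m - k)) - int (fact m div fact (Suc m - k))"
proof -
  have fin: "finite (Dset m (k - 1))" unfolding Dset_def
    by (rule finite_subset[OF _ finite_permutations[of "{1..m}"]]) auto
  have sub: "Dset m (k - 1) \<subseteq> Dset m k" unfolding Dset_def by auto
  have eq: "{\<pi>. \<pi> permutes {1..m} \<and> last_descent m \<pi> = k} = Dset m k - Dset m (k - 1)"
  proof -
    have "last_descent m \<pi> = k \<longleftrightarrow> last_descent m \<pi> \<le> k \<and> \<not> last_descent m \<pi> \<le> k - 1" for \<pi>
      using assms by auto
    then show ?thesis unfolding Dset_def using ld_le by blast
  qed
  have "bnum m k = card (Dset m k) - card (Dset m (k - 1))"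
    unfolding bnum_def eq using card_Diff_subset[OF fin sub] .
  moreover have "card (Dset m (k - 1)) \<le> card (Dset m k)"
    by (rule card_mono[OF _ sub]) (simp add: Dset_def finite_subset[OF _ finite_permutations[of "{1..m}"]])
  moreover have "Suc m - k = m - (k - 1)" using assms by simp
  ultimately show ?thesis using card_Dset[of k m] card_Dset[of "k - 1" m] assms by simp
qed




abbreviation zz :: "real poly" where "zz \<equiv> monom 1 1"

function Ef :: "nat \<Rightarrow> nat \<Rightarrow> nat \<Rightarrow> real poly" where
  "Ef n s j = (if n \<le> s then 1 else (\<Sum>k\<le>Suc s. (if j < k then zz else 1) * Ef n (Suc s) k))"
  by auto
termination by (relation "measure (\<lambda>(n,s,j). n - s)") auto

declare Ef.simps[simp del]

lemma Ef_step: "s < n \<Longrightarrow> Ef n s j = (\<Sum>k\<le>Suc s. (if j < k then zz else 1) * Ef n (Suc s) k)"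
  by (subst Ef.simps) simp

lemma Ef_top: "n \<le> s \<Longrightarrow> Ef n s j = 1"
  by (subst Ef.simps) simp

lemma one_plus_z: "[:1,1:] = 1 + (monom 1 1 :: real poly)"
  by (auto simp: poly_eq_iff coeff_pCons coeff_monom split: nat.split)

lemma two_smult: "smult 2 (x::real poly) = x + x"
  by (metis one_add_one smult_add_left smult_1_left)

lemma sum_refl_half:
  fixes f :: "nat \<Rightarrow> real poly"
  shows "(\<Sum>k\<le>m. f k) = smult (1/2) (\<Sum>k\<le>m. f k + f (m - k))"
proof -
  have "(\<Sum>k\<le>m. f (m - k)) = (\<Sum>k\<le>m. f k)"
    using sum.atLeastAtMost_rev[of f 0 m] by (simp add: atLeast0AtMost)
  then have "(\<Sum>k\<le>m. f k + f (m - k)) = smult 2 (\<Sum>k\<le>m. f k)"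
    by (simp add: sum.distrib two_smult)
  then show ?thesis by simp
qed

lemma Ef_main:
  assumes "s \<le> n"
  shows "(\<forall>j\<le>s. gpos (n - s) (Ef n s j + Ef n s (s - j))) \<and>
         (\<forall>j. 2 * j < s \<longrightarrow> gpos (n - s + 1) (Ef n s j + zz * Ef n s (s - j)))"
  using assms
proof (induction "n - s" arbitrary: s)
  case 0
  then have "n = s" by simp
  have b1: "gpos 0 (2::real poly)" using gpos_const[of 2] by (simp add: numeral_poly[symmetric])
  have b2: "gpos 1 (1 + zz)" using gpos_one_plus_z by (simp only: one_plus_z)
  have b3: "(1::real poly) + 1 = 2" by simp
  show ?case using \<open>n = s\<close> b1 b2 by (simp add: Ef_top b3)
next
  case (Suc m)
  then have sn: "s < n" by simp
  have m: "m = n - Suc s" "Suc s \<le> n" using Suc.hyps(2) sn by auto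
  note IH = Suc.hyps(1)[OF m]
  have IHR: "gpos (n - Suc s) (Ef n (Suc s) k + Ef n (Suc s) (Suc s - k))" if "k \<le> Suc s" for k
    using IH that by blast
  have IHP: "gpos (n - Suc s + 1) (Ef n (Suc s) k + zz * Ef n (Suc s) (Suc s - k))" if "2 * k < Suc s" for k
    using IH that by blast
  let ?E = "\<lambda>k. Ef n (Suc s) k"
  have R2: "gpos (n - s) (Ef n s j + Ef n s (s - j))" if j: "2 * j \<le> s" for j
  proof -
    define c where "c k = (if j < k then zz else 1) + (if s - j < k then zz else 1)" for k
    have "Ef n s j + Ef n s (s - j) = (\<Sum>k\<le>Suc s. c k * ?E k)"
      by (simp only: Ef_step[OF sn] c_def distrib_right sum.distrib)
    also have "\<dots> = smult (1/2) (\<Sum>k\<le>Suc s. c k * ?E k + c (Suc s - k) * ?E (Suc s - k))"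
      by (rule sum_refl_half)
    finally have eq: "Ef n s j + Ef n s (s - j) = \<dots>" .
    have "gpos (n - s) (c k * ?E k + c (Suc s - k) * ?E (Suc s - k))" if k: "k \<le> Suc s" for k
    proof -
      consider "k \<le> j" | "s - j < k" | "j < k" "k \<le> s - j" by linarith
      then show ?thesis
      proof cases
        case 1
        then have "c k = 1 + 1" "c (Suc s - k) = zz + zz" using j by (auto simp: c_def)
        then have "c k * ?E k + c (Suc s - k) * ?E (Suc s - k) = smult 2 (?E k + zz * ?E (Suc s - k))"
          by (simp only: two_smult ring_distribs mult_1_left add_ac)
        moreover have "gpos (n - s) (?E k + zz * ?E (Suc s - k))"
          using IHP[of k] 1 j sn by (simp add: Suc_diff_Suc)
        ultimately show ?thesis by (simp add: gpos_smult)
      next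
        case 2
        then have "c k = zz + zz" "c (Suc s - k) = 1 + 1" using j k by (auto simp: c_def)
        moreover have "Suc s - (Suc s - k) = k" using k by simp
        ultimately have "c k * ?E k + c (Suc s - k) * ?E (Suc s - k) = smult 2 (?E (Suc s - k) + zz * ?E (Suc s - (Suc s - k)))"
          by (simp only: two_smult ring_distribs mult_1_left add_ac)
        moreover have "gpos (n - s) (?E (Suc s - k) + zz * ?E (Suc s - (Suc s - k)))"
          using IHP[of "Suc s - k"] 2 j k sn by (simp add: Suc_diff_Suc)
        ultimately show ?thesis by (simp add: gpos_smult)
      next
        case 3
        then have "c k = zz + 1" "c (Suc s - k) = 1 + zz" using j k by (auto simp: c_def)
        moreover have "[:1,1:] = 1 + zz" by (rule one_plus_z)
        ultimately have "c k * ?E k + c (Suc s - k) * ?E (Suc s - k) = [:1,1:] * (?E k + ?E (Suc s - k))"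
          by (simp only: ring_distribs add_ac)
        moreover have "gpos (n - s) ([:1,1:] * (?E k + ?E (Suc s - k)))"
          using gpos_mult_1z[OF IHR[OF k]] sn by (simp add: Suc_diff_Suc)
        ultimately show ?thesis by simp
      qed
    qed
    then show ?thesis unfolding eq by (intro gpos_smult gpos_sum) auto
  qed
  have P2: "gpos (n - s + 1) (Ef n s j + zz * Ef n s (s - j))" if j: "2 * j < s" for j
  proof -
    define c where "c k = (if j < k then zz else 1) + zz * (if s - j < k then zz else 1)" for k
    have "Ef n s j + zz * Ef n s (s - j) = (\<Sum>k\<le>Suc s. c k * ?E k)"
      by (simp only: Ef_step[OF sn] c_def distrib_right sum.distrib sum_distrib_left mult.assoc)
    also have "\<dots> = smult (1/2) (\<Sum>k\<le>Suc s. c k * ?E k + c (Suc s - k) * ?E (Suc s - k))"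
      by (rule sum_refl_half)
    finally have eq: "Ef n s j + zz * Ef n s (s - j) = \<dots>" .
    have "gpos (n - s + 1) (c k * ?E k + c (Suc s - k) * ?E (Suc s - k))" if k: "k \<le> Suc s" for k
    proof -
      consider "k \<le> j" | "s - j < k" | "j < k" "k \<le> s - j" by linarith
      then show ?thesis
      proof cases
        case 1
        then have "c k = 1 + zz * 1" "c (Suc s - k) = zz + zz * zz" using j by (auto simp: c_def)
        moreover have "[:1,1:] = 1 + zz" by (rule one_plus_z)
        ultimately have "c k * ?E k + c (Suc s - k) * ?E (Suc s - k) = [:1,1:] * (?E k + zz * ?E (Suc s - k))"
          by (simp only: ring_distribs mult_1_left mult_1_right add_ac mult.assoc)
        moreover have "gpos (n - s + 1) ([:1,1:] * (?E k + zz * ?E (Suc s - k)))"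
          using gpos_mult_1z[OF IHP[of k]] 1 j sn by (simp add: Suc_diff_Suc)
        ultimately show ?thesis by simp
      next
        case 2
        then have "c k = zz + zz * zz" "c (Suc s - k) = 1 + zz * 1" using j k by (auto simp: c_def)
        moreover have "[:1,1:] = 1 + zz" by (rule one_plus_z)
        moreover have "Suc s - (Suc s - k) = k" using k by simp
        ultimately have "c k * ?E k + c (Suc s - k) * ?E (Suc s - k) = [:1,1:] * (?E (Suc s - k) + zz * ?E (Suc s - (Suc s - k)))"
          by (simp only: ring_distribs mult_1_left mult_1_right add_ac mult.assoc)
        moreover have "gpos (n - s + 1) ([:1,1:] * (?E (Suc s - k) + zz * ?E (Suc s - (Suc s - k))))"
          using gpos_mult_1z[OF IHP[of "Suc s - k"]] 2 j k sn by (simp add: Suc_diff_Suc)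
        ultimately show ?thesis by simp
      next
        case 3
        then have "c k = zz + zz * 1" "c (Suc s - k) = zz + zz * 1" using j k by (auto simp: c_def)
        then have "c k * ?E k + c (Suc s - k) * ?E (Suc s - k) = smult 2 (zz * (?E k + ?E (Suc s - k)))"
          by (simp only: two_smult ring_distribs mult_1_right add_ac)
        moreover have "gpos (n - s + 1) (zz * (?E k + ?E (Suc s - k)))"
        proof -
          have "n - Suc s + 2 = n - s + 1" using sn by simp
          then show ?thesis using gpos_mult_z[OF IHR[OF k]] by simp
        qed
        ultimately show ?thesis by (simp add: gpos_smult)
      qed
    qed
    then show ?thesis unfolding eq by (intro gpos_smult gpos_sum) auto
  qed
  have "gpos (n - s) (Ef n s j + Ef n s (s - j))" if "j \<le> s" for j
  proof (cases "2 * j \<le> s")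
    case True then show ?thesis by (rule R2)
  next
    case False
    then have "2 * (s - j) \<le> s" "s - (s - j) = j" using that by auto
    then show ?thesis using R2[of "s - j"] by (simp add: add.commute)
  qed
  then show ?case using P2 by auto
qed




definition cw :: "nat \<Rightarrow> nat \<Rightarrow> real poly" where
  "cw s t = (let a = Suc s * (t mod fact s); b = t mod fact (Suc s) in
              if a = b then 0 else if a < b then zz else 1)"

function Tf :: "nat \<Rightarrow> nat \<Rightarrow> nat \<Rightarrow> real poly" where
  "Tf n s r = (if n < s then 1 else
     (\<Sum>d\<le>s. cw s (d * fact s + r) * Tf n (Suc s) (d * fact s + r)))"
  by auto
termination by (relation "measure (\<lambda>(n,s,r). Suc n - s)") auto

declare Tf.simps[simp del]

lemma Tf_step: "s \<le> n \<Longrightarrow> Tf n s r = (\<Sum>d\<le>s. cw s (d * fact s + r) * Tf n (Suc s) (d * fact s + r))"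
  by (subst Tf.simps) simp

lemma Tf_top: "n < s \<Longrightarrow> Tf n s r = 1"
  by (subst Tf.simps) simp

lemma sum_split_mult:
  fixes f :: "nat \<Rightarrow> 'a::comm_monoid_add"
  shows "(\<Sum>u<a * b. f u) = (\<Sum>r<b. \<Sum>d<a. f (d * b + r))"
proof (induction a)
  case 0 then show ?case by simp
next
  case (Suc a)
  have "(\<Sum>u<Suc a * b. f u) = (\<Sum>u<a * b. f u) + (\<Sum>u\<in>{a*b..<a*b+b}. f u)"
    by (simp add: sum.atLeastLessThan_concat[symmetric] lessThan_atLeast0 add.commute)
  also have "(\<Sum>u\<in>{a*b..<a*b+b}. f u) = (\<Sum>r<b. f (a * b + r))"
    by (simp add: sum.shift_bounds_nat_ivl[where k="a*b" and m=0, simplified] lessThan_atLeast0 add.commute)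
  finally show ?case by (simp add: Suc sum.distrib)
qed

lemma mod_add_dvd: "(m::nat) dvd x \<Longrightarrow> (x + r) mod m = r mod m"
  by (metis dvd_imp_mod_0 mod_add_left_eq add_0)

lemma cw_mod: assumes "s' < s" shows "cw s' (d * fact s + r) = cw s' r"
proof -
  have "fact s' dvd (fact s :: nat)" by (rule fact_dvd) (use assms in auto)
  moreover have "fact (Suc s') dvd (fact s :: nat)" by (rule fact_dvd) (use assms in auto)
  ultimately have "fact s' dvd (fact s :: nat)" "fact (Suc s') dvd (fact s :: nat)" by blast+
  then have "(d * fact s + r) mod fact s' = r mod fact s'" "(d * fact s + r) mod fact (Suc s') = r mod fact (Suc s')"
    by (auto intro!: mod_add_dvd)
  then show ?thesis by (simp add: cw_def)
qed

lemma invariant: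
  assumes "1 \<le> s" "s \<le> Suc n"
  shows "(\<Sum>t<fact (Suc n). \<Prod>s'\<in>{1..n}. cw s' t) = (\<Sum>r<fact s. (\<Prod>s'\<in>{1..<s}. cw s' r) * Tf n s r)"
  using assms
proof (induction "Suc n - s" arbitrary: s)
  case 0
  then have "s = Suc n" by simp
  then show ?case by (simp add: Tf_top atLeastLessThanSuc_atLeastAtMost)
next
  case (Suc m)
  then have sn: "s \<le> n" by simp
  have IH: "(\<Sum>t<fact (Suc n). \<Prod>s'\<in>{1..n}. cw s' t) = (\<Sum>u<fact (Suc s). (\<Prod>s'\<in>{1..<Suc s}. cw s' u) * Tf n (Suc s) u)"
    using Suc.hyps(1)[of "Suc s"] Suc.hyps(2) Suc.prems sn by simp
  also have "\<dots> = (\<Sum>r<fact s. \<Sum>d<Suc s. (\<Prod>s'\<in>{1..<Suc s}. cw s' (d * fact s + r)) * Tf n (Suc s) (d * fact s + r))"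
    by (simp only: fact_Suc[of s] of_nat_id sum_split_mult)
  also have "\<dots> = (\<Sum>r<fact s. (\<Prod>s'\<in>{1..<s}. cw s' r) * Tf n s r)"
  proof (rule sum.cong[OF refl])
    fix r
    have "(\<Sum>d<Suc s. (\<Prod>s'\<in>{1..<Suc s}. cw s' (d * fact s + r)) * Tf n (Suc s) (d * fact s + r))
        = (\<Sum>d<Suc s. (\<Prod>s'\<in>{1..<s}. cw s' r) * (cw s (d * fact s + r) * Tf n (Suc s) (d * fact s + r)))"
    proof (rule sum.cong[OF refl])
      fix d
      have e: "{1..<Suc s} = insert s {1..<s}" using Suc.prems by auto
      have "(\<Prod>s'\<in>{1..<s}. cw s' (d * fact s + r)) = (\<Prod>s'\<in>{1..<s}. cw s' r)"
        by (rule prod.cong[OF refl]) (simp add: cw_mod)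
      then show "(\<Prod>s'\<in>{1..<Suc s}. cw s' (d * fact s + r)) * Tf n (Suc s) (d * fact s + r)
        = (\<Prod>s'\<in>{1..<s}. cw s' r) * (cw s (d * fact s + r) * Tf n (Suc s) (d * fact s + r))"
        unfolding e by (simp add: mult_ac)
    qed
    also have "\<dots> = (\<Prod>s'\<in>{1..<s}. cw s' r) * Tf n s r"
      by (simp add: Tf_step[OF sn] sum_distrib_left lessThan_Suc_atMost)
    finally show "(\<Sum>d<Suc s. (\<Prod>s'\<in>{1..<Suc s}. cw s' (d * fact s + r)) * Tf n (Suc s) (d * fact s + r))
        = (\<Prod>s'\<in>{1..<s}. cw s' r) * Tf n s r" .
  qed
  finally show ?case .
qed

lemma even_fact2: "2 \<le> s \<Longrightarrow> even (fact s :: nat)"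
  by (rule dvd_fact) auto

lemma Tf_Ef:
  assumes "3 \<le> s" "s \<le> Suc n" "r < fact s" "odd r"
  shows "Tf n s r = Ef n (s - 1) (r div fact (s - 1))"
  using assms
proof (induction "Suc n - s" arbitrary: s r)
  case 0
  then show ?case by (simp add: Tf_top Ef_top)
next
  case (Suc m)
  then have sn: "s \<le> n" by simp
  obtain s0 where s0: "s = Suc s0" using Suc.prems by (cases s) auto
  have fs: "fact s = s * fact s0" using s0 by (simp add: fact_Suc)
  have IH: "Tf n (Suc s) (d * fact s + r) = Ef n s d" if "d \<le> s" for d
  proof -
    have "d * fact s + r < fact (Suc s)"
    proof -
      have "d * fact s + r < d * fact s + fact s" using Suc.prems by simp
      also have "\<dots> = Suc d * fact s" by simp
      also have "\<dots> \<le> Suc s * fact s" using that by (intro mult_right_mono) auto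
      finally show ?thesis by (simp add: fact_Suc)
    qed
    moreover have "odd (d * fact s + r)"
    proof -
      have "even (fact s :: nat)" using Suc.prems by (intro even_fact2) auto
      then show ?thesis using Suc.prems by simp
    qed
    moreover have "(d * fact s + r) div fact s = d" using Suc.prems by simp
    ultimately show ?thesis using Suc.hyps(1)[of "Suc s" "d * fact s + r"] Suc.hyps(2) Suc.prems sn by simp
  qed
  have cwv: "cw s (d * fact s + r) = (if r div fact s0 < d then zz else 1)" if "d \<le> s" for d
  proof -
    have m1: "(d * fact s + r) mod fact s = r" using Suc.prems by simp
    have m2: "(d * fact s + r) mod fact (Suc s) = d * fact s + r"
    proof -
      have "d * fact s + r < Suc s * fact s"
      proof -
        have "d * fact s + r < Suc d * fact s" using Suc.prems by simp
        also have "\<dots> \<le> Suc s * fact s" using that by (intro mult_right_mono) auto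
        finally show ?thesis .
      qed
      then show ?thesis by (simp add: fact_Suc)
    qed
    have ne: "Suc s * r \<noteq> d * fact s + r"
    proof
      assume "Suc s * r = d * fact s + r"
      then have "s * r = s * (d * fact s0)" using fs by (simp add: algebra_simps)
      then have "r = d * fact s0" using Suc.prems by simp
      moreover have "even (fact s0 :: nat)" using Suc.prems s0 by (intro even_fact2) auto
      ultimately show False using Suc.prems by simp
    qed
    have lt: "(Suc s * r < d * fact s + r) \<longleftrightarrow> r div fact s0 < d"
    proof -
      have "(Suc s * r < d * fact s + r) \<longleftrightarrow> s * r < s * (d * fact s0)" using fs by (simp add: algebra_simps)
      also have "\<dots> \<longleftrightarrow> r < d * fact s0" using Suc.prems by simp
      also have "\<dots> \<longleftrightarrow> r div fact s0 < d" by (simp add: less_mult_imp_div_less div_less_iff_less_mult)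
      finally show ?thesis .
    qed
    show ?thesis unfolding cw_def Let_def m1 m2 using ne lt by simp
  qed
  have "Tf n s r = (\<Sum>d\<le>s. (if r div fact s0 < d then zz else 1) * Ef n s d)"
    by (simp add: Tf_step[OF sn] cwv IH)
  also have "\<dots> = Ef n (s - 1) (r div fact (s - 1))"
    using s0 sn by (simp add: Ef_step)
  finally show ?case .
qed

lemma Tf_start: assumes "2 \<le> n" shows "Tf n 1 0 = zz * (Ef n 2 0 + zz * Ef n 2 2)"
proof -
  have a1: "{..1::nat} = {0,1}" "{..2::nat} = {0,1,2}" by auto
  have c: "cw 1 0 = 0" "cw 1 1 = zz" "cw 2 1 = 1" "cw 2 3 = 0" "cw 2 5 = zz"
    by (simp_all add: cw_def fact_numeral)
  have "Tf n 1 0 = (\<Sum>d\<le>1. cw 1 (d * fact 1 + 0) * Tf n 2 (d * fact 1 + 0))"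
    using Tf_step[of 1 n 0] assms by (simp add: numeral_2_eq_2)
  also have "\<dots> = zz * Tf n 2 1" by (simp add: a1 c[simplified])
  finally have t1: "Tf n 1 0 = zz * Tf n 2 1" .
  have "Tf n 2 1 = (\<Sum>d\<le>2. cw 2 (d * fact 2 + 1) * Tf n 3 (d * fact 2 + 1))"
    using Tf_step[of 2 n 1] assms by (simp add: numeral_3_eq_3)
  also have "\<dots> = Tf n 3 1 + zz * Tf n 3 5" by (simp add: a1 c[simplified])
  finally have t2: "Tf n 2 1 = Tf n 3 1 + zz * Tf n 3 5" .
  note t1
  also note t2
  also have "Tf n 3 1 = Ef n 2 0" using assms by (subst Tf_Ef) (auto simp: fact_numeral)
  also have "Tf n 3 5 = Ef n 2 2" using assms by (subst Tf_Ef) (auto simp: fact_numeral)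
  finally show ?thesis .
qed

lemma main_sum_gpos:
  assumes "2 \<le> n"
  shows "gpos (Suc n) (\<Sum>t<fact (Suc n). \<Prod>s'\<in>{1..n}. cw s' t)"
proof -
  have "(\<Sum>t<fact (Suc n). \<Prod>s'\<in>{1..n}. cw s' t) = Tf n 1 0"
    using invariant[of 1 n] by simp
  also have "\<dots> = zz * (Ef n 2 0 + zz * Ef n 2 (2 - 0))" using Tf_start[OF assms] by simp
  finally have e: "(\<Sum>t<fact (Suc n). \<Prod>s'\<in>{1..n}. cw s' t) = \<dots>" .
  have "gpos (n - 2 + 1) (Ef n 2 0 + zz * Ef n 2 (2 - 0))"
    using Ef_main[of 2 n] assms by auto
  from gpos_mult_z[OF this] have "gpos (n - 2 + 1 + 2) (zz * (Ef n 2 0 + zz * Ef n 2 (2 - 0)))" .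
  moreover have "n - 2 + 1 + 2 = Suc n" using assms by simp
  ultimately show ?thesis using e by simp
qed




lemma bnum_formula:
  assumes "1 \<le> j" "j \<le> n"
  shows "int (bnum (Suc n) j) = int (fact (Suc n) div fact (Suc n - j)) - int (fact (Suc n) div fact (Suc (Suc n) - j))"
  by (rule bnum_formula0) (use assms in auto)

definition GG :: "nat \<Rightarrow> nat \<Rightarrow> nat \<Rightarrow> int" where
  "GG n s t = int (fact (Suc n) div fact s) * int (t mod fact s)"

definition Bs :: "nat \<Rightarrow> nat \<Rightarrow> int" where
  "Bs n s = int (fact (Suc n) div fact s) - int (fact (Suc n) div fact (Suc s))"

lemma reindex_rev: "(\<Sum>j\<in>{1..n}. f (Suc n - j)) = (\<Sum>s\<in>{1..n}. (f s :: 'a::comm_monoid_add))"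
  by (rule sum.reindex_bij_witness[where i="\<lambda>x. Suc n - x" and j="\<lambda>x. Suc n - x"]) auto

lemma bnum_Bs: "1 \<le> j \<Longrightarrow> j \<le> n \<Longrightarrow> int (bnum (Suc n) j) = Bs n (Suc n - j)"
  unfolding Bs_def by (simp add: bnum_formula Suc_diff_le)

lemma fact_dvd_N: "s \<le> Suc n \<Longrightarrow> fact s dvd (fact (Suc n) :: nat)"
  by (rule fact_dvd)

lemma sum_Bs: "(\<Sum>s\<in>{1..n}. Bs n s) = int (fact (Suc n)) - 1"
proof -
  have "(\<Sum>s\<in>{1..n}. Bs n s) = - (\<Sum>s\<in>{1..n}. int (fact (Suc n) div fact (Suc s)) - int (fact (Suc n) div fact s))"
    by (simp add: Bs_def sum_negf[symmetric])
  also have "(\<Sum>s\<in>{1..n}. int (fact (Suc n) div fact (Suc s)) - int (fact (Suc n) div fact s))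
      = int (fact (Suc n) div fact (Suc n)) - int (fact (Suc n) div fact 1)"
    by (rule sum_Suc_diff) simp
  finally show ?thesis by simp
qed

lemma sum_bnum: "(\<Sum>j\<in>{1..n}. int (bnum (Suc n) j)) = int (fact (Suc n)) - 1"
proof -
  have "(\<Sum>j\<in>{1..n}. int (bnum (Suc n) j)) = (\<Sum>j\<in>{1..n}. Bs n (Suc n - j))"
    by (rule sum.cong) (auto simp: bnum_Bs)
  also have "\<dots> = (\<Sum>s\<in>{1..n}. Bs n s)" by (rule reindex_rev)
  finally show ?thesis using sum_Bs by simp
qed

lemma GG_bounds: "s \<le> Suc n \<Longrightarrow> 0 \<le> GG n s t \<and> GG n s t < int (fact (Suc n))"
proof -
  assume s: "s \<le> Suc n"
  define K where "K = fact (Suc n) div (fact s :: nat)"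
  have KN: "K * fact s = fact (Suc n)" using fact_dvd_N[OF s] by (simp add: K_def)
  have "K > 0" using KN by (metis fact_gt_zero gr0I mult_is_0 less_not_refl)
  then have "K * (t mod fact s) < K * fact s" by simp
  then have "int (K * (t mod fact s)) < int (fact (Suc n))" using KN by linarith
  then show ?thesis by (simp add: GG_def K_def[symmetric] del: fact_Suc)
qed

lemma key_mod:
  assumes "1 \<le> s" "s \<le> n"
  shows "(int t * Bs n s) mod int (fact (Suc n)) =
     (if GG n (Suc s) t \<le> GG n s t then GG n s t - GG n (Suc s) t else GG n s t - GG n (Suc s) t + int (fact (Suc n)))"
proof -
  define N where "N = (fact (Suc n) :: nat)"
  have d1: "t * (N div fact s) = t div fact s * N + nat (GG n s t)"
    if "s \<le> Suc n" for s
  proof -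
    have aux: "(q * f + r) * K = q * (f * K) + K * r" for q f r K :: nat by (simp add: algebra_simps)
    have "t * (N div fact s) = (t div fact s * fact s + t mod fact s) * (N div fact s)" by simp
    also have "\<dots> = t div fact s * (fact s * (N div fact s)) + (N div fact s) * (t mod fact s)"
      by (rule aux)
    also have "fact s * (N div fact s) = N" using fact_dvd_N[OF that] by (simp add: N_def)
    finally show ?thesis by (simp add: GG_def N_def nat_mult_distrib)
  qed
  have "int t * Bs n s = int (t * (N div fact s)) - int (t * (N div fact (Suc s)))"
    by (simp add: Bs_def N_def algebra_simps)
  also have "\<dots> = int N * (int (t div fact s) - int (t div fact (Suc s))) + (GG n s t - GG n (Suc s) t)"
    using d1[of s] d1[of "Suc s"] assms GG_bounds[of s n t] GG_bounds[of "Suc s" n t]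
    by (simp add: algebra_simps)
  finally have e: "int t * Bs n s = \<dots>" .
  have b: "0 \<le> GG n s t" "GG n s t < int N" "0 \<le> GG n (Suc s) t" "GG n (Suc s) t < int N"
    using GG_bounds[of s n t] GG_bounds[of "Suc s" n t] assms by (auto simp: N_def)
  have "(int t * Bs n s) mod int N = (GG n s t - GG n (Suc s) t) mod int N"
    unfolding e by (simp add: mod_add_left_eq[symmetric])
  also have "\<dots> = (if GG n (Suc s) t \<le> GG n s t then GG n s t - GG n (Suc s) t else GG n s t - GG n (Suc s) t + int N)"
  proof (cases "GG n (Suc s) t \<le> GG n s t")
    case True then show ?thesis using b by (simp add: mod_pos_pos_trivial)
  next
    case False
    have "(GG n s t - GG n (Suc s) t) mod int N = (GG n s t - GG n (Suc s) t + int N) mod int N" by simp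
    also have "\<dots> = GG n s t - GG n (Suc s) t + int N" using b False by (intro mod_pos_pos_trivial) auto
    finally show ?thesis using False by simp
  qed
  finally show ?thesis by (simp add: N_def)
qed

lemma asc_iff:
  assumes "1 \<le> s" "s \<le> n"
  shows "(Suc s * (t mod fact s) < t mod fact (Suc s)) \<longleftrightarrow> GG n s t < GG n (Suc s) t"
    and "(Suc s * (t mod fact s) = t mod fact (Suc s)) \<longleftrightarrow> GG n s t = GG n (Suc s) t"
proof -
  define K where "K = fact (Suc n) div (fact (Suc s) :: nat)"
  have KN: "K * fact (Suc s) = fact (Suc n)" using fact_dvd_N[of "Suc s" n] assms by (simp add: K_def)
  have "K > 0" using KN by (metis fact_gt_zero gr0I mult_is_0 less_not_refl)
  have fs: "fact (Suc s) = Suc s * (fact s::nat)" by simp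
  have "fact (Suc n) = (K * Suc s) * (fact s :: nat)" using KN unfolding fs by (simp only: mult.assoc)
  then have Ks: "fact (Suc n) div fact s = K * Suc s" by (metis fact_gt_zero nonzero_mult_div_cancel_right less_not_refl)
  have g1: "GG n s t = int K * int (Suc s * (t mod fact s))" unfolding GG_def Ks by (simp add: algebra_simps del: fact_Suc)
  have g2: "GG n (Suc s) t = int K * int (t mod fact (Suc s))" unfolding GG_def K_def by (simp del: fact_Suc)
  show "(Suc s * (t mod fact s) < t mod fact (Suc s)) \<longleftrightarrow> GG n s t < GG n (Suc s) t"
    unfolding g1 g2 of_nat_mult[symmetric] of_nat_less_iff using \<open>K > 0\<close> by (metis mult_less_cancel1)
  show "(Suc s * (t mod fact s) = t mod fact (Suc s)) \<longleftrightarrow> GG n s t = GG n (Suc s) t"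
    unfolding g1 g2 of_nat_mult[symmetric] of_nat_eq_iff using \<open>K > 0\<close> by (metis nat_mult_eq_cancel1)
qed

lemma prod_if_cnt:
  assumes "finite S"
  shows "(\<Prod>s\<in>S. (if P s then 0 else if Q s then zz else 1)) =
         (if \<exists>s\<in>S. P s then 0 else monom 1 (card {s\<in>S. Q s}))"
  using assms
proof (induction S rule: finite_induct)
  case empty then show ?case by (simp add: monom_0 one_pCons)
next
  case (insert x F)
  have fin: "finite {s\<in>F. Q s}" using insert by simp
  have nx: "x \<notin> {s\<in>F. Q s}" using insert by simp
  show ?case
  proof (cases "Q x")
    case True
    have c: "{s \<in> insert x F. Q s} = insert x {s\<in>F. Q s}" using True by auto
    have "card {s \<in> insert x F. Q s} = Suc (card {s\<in>F. Q s})" unfolding c using fin nx by simp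
    then show ?thesis using insert True by (simp add: mult_monom)
  next
    case False
    have c: "{s \<in> insert x F. Q s} = {s\<in>F. Q s}" using False by auto
    then show ?thesis using insert False by simp
  qed
qed




definition BB :: "nat \<Rightarrow> nat \<Rightarrow> int" where "BB n j = int (bnum (Suc n) j)"
definition NN :: "nat \<Rightarrow> int" where "NN n = int (fact (Suc n))"

definition yv :: "nat \<Rightarrow> nat \<Rightarrow> nat \<Rightarrow> int" where
  "yv n t = (\<lambda>j. if j \<in> {1..n} then - (int t * BB n j div NN n) else 0)"
definition hv :: "nat \<Rightarrow> nat \<Rightarrow> int" where
  "hv n t = int t - (\<Sum>j\<in>{1..n}. int t * BB n j div NN n)"
definition goodt :: "nat \<Rightarrow> nat \<Rightarrow> bool" where
  "goodt n t \<longleftrightarrow> 0 < t \<and> int t < NN n \<and> (\<forall>j\<in>{1..n}. int t * BB n j mod NN n \<noteq> 0)"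

lemma NN_pos: "NN n > 0" unfolding NN_def by (simp only: of_nat_0_less_iff fact_gt_zero)

lemma sum_BB: "(\<Sum>j\<in>{1..n}. BB n j) = NN n - 1"
  using sum_bnum[of n] by (simp add: BB_def NN_def)

lemma sum_BB_real: "(\<Sum>j\<in>{1..n}. real (bnum (Suc n) j)) = real_of_int (NN n) - 1"
proof -
  have "(\<Sum>j\<in>{1..n}. real (bnum (Suc n) j)) = real_of_int (\<Sum>j\<in>{1..n}. BB n j)"
    by (simp add: BB_def)
  moreover have "real_of_int (\<Sum>j\<in>{1..n}. BB n j) = real_of_int (NN n) - 1" using sum_BB[of n] by simp
  ultimately show ?thesis by simp
qed

lemma vsum:
  assumes "j \<in> {1..n}"
  shows "(\<Sum>i\<le>n. c i * real_of_int (factoradic_vertices n i j)) = c j - c 0 * real (bnum (Suc n) j)"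
proof -
  have e: "{..n} = insert 0 {1..n}" by auto
  have "(\<Sum>i\<in>{1..n}. c i * real_of_int (factoradic_vertices n i j)) = (\<Sum>i\<in>{1..n}. if i = j then c i else 0)"
    by (rule sum.cong) (use assms in \<open>auto simp: factoradic_vertices_def\<close>)
  also have "\<dots> = c j" using assms by (simp add: sum.delta)
  finally show ?thesis unfolding e using assms by (simp add: factoradic_vertices_def)
qed

lemma hsum: "(\<Sum>i\<le>(n::nat). c i) = c 0 + (\<Sum>j\<in>{1..n}. c j :: real)"
proof -
  have e: "{..n} = insert 0 {1..n}" by auto
  show ?thesis unfolding e by simp
qed

lemma intlem:
  fixes N y X :: int
  assumes "N > 0" "0 < N * y + X" "N * y + X < N"
  shows "y = - (X div N) \<and> X mod N \<noteq> 0"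
proof -
  have X: "X = N * (X div N) + X mod N" by simp
  have m: "0 \<le> X mod N" "X mod N < N" using assms by auto
  define k where "k = y + X div N"
  have e: "N * y + X = N * k + X mod N" unfolding k_def using X by (simp add: algebra_simps)
  have "k = 0"
  proof (rule ccontr)
    assume "k \<noteq> 0"
    then consider "k \<ge> 1" | "k \<le> -1" by linarith
    then show False
    proof cases
      case 1 then have "N * k \<ge> N" using assms by simp
      then show False using e m assms by linarith
    next
      case 2 then have "N * k \<le> N * (-1)" using assms by (intro mult_left_mono) auto
      then have "N * k \<le> - N" by simp
      then show False using e m assms by linarith
    qed
  qed
  then show ?thesis using e assms unfolding k_def by auto
qed

lemma real_divmod: "real_of_int (X::int) = real_of_int N * real_of_int (X div N) + real_of_int (X mod N)"
  by (metis of_int_add of_int_mult mult_div_mod_eq)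

lemma hv_N: "NN n * hv n t = int t + (\<Sum>j\<in>{1..n}. int t * BB n j mod NN n)"
proof -
  have "NN n * hv n t = NN n * int t - (\<Sum>j\<in>{1..n}. NN n * (int t * BB n j div NN n))"
    by (simp add: hv_def algebra_simps sum_distrib_left)
  also have "(\<Sum>j\<in>{1..n}. NN n * (int t * BB n j div NN n)) = (\<Sum>j\<in>{1..n}. int t * BB n j - int t * BB n j mod NN n)"
    by (rule sum.cong) (auto simp: minus_mod_eq_mult_div)
  also have "\<dots> = int t * (NN n - 1) - (\<Sum>j\<in>{1..n}. int t * BB n j mod NN n)"
    using sum_BB[of n] by (simp add: sum_subtractf sum_distrib_left[symmetric])
  finally show ?thesis by (simp add: algebra_simps)
qed

lemma par_eq:
  "par_lattice_points n n (factoradic_vertices n) = (\<lambda>t. (yv n t, hv n t)) ` {t. goodt n t}"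
proof (intro equalityI subsetI)
  fix p assume pin: "p \<in> par_lattice_points n n (factoradic_vertices n)"
  obtain y h where p: "p = (y, h)" by (cases p)
  have pin': "(\<forall>j. j \<notin> {1..n} \<longrightarrow> y j = 0) \<and>
        (\<exists>c :: nat \<Rightarrow> real. (\<forall>i\<le>n. 0 < c i \<and> c i < 1) \<and>
           (\<forall>j\<in>{1..n}. real_of_int (y j) = (\<Sum>i\<le>n. c i * real_of_int (factoradic_vertices n i j))) \<and>
           real_of_int h = (\<Sum>i\<le>n. c i))"
    using pin unfolding p par_lattice_points_def by (simp only: mem_Collect_eq case_prod_conv, simp)
  then have y0: "\<forall>j. j \<notin> {1..n} \<longrightarrow> y j = 0" by (rule conjunct1)
  from pin' obtain c where c: "\<forall>i\<le>n. 0 < c i \<and> c i < 1"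
    and yc: "\<forall>j\<in>{1..n}. real_of_int (y j) = (\<Sum>i\<le>n. c i * real_of_int (factoradic_vertices n i j))"
    and hc: "real_of_int h = (\<Sum>i\<le>n. c i)"
    by (elim conjE exE)
  have yj: "real_of_int (y j) = c j - c 0 * real (bnum (Suc n) j)" if "j \<in> {1..n}" for j
    using yc that vsum[OF that] by simp
  define T where "T = h - (\<Sum>j\<in>{1..n}. y j)"
  define R where "R = real_of_int (NN n)"
  have R0: "R > 0" using NN_pos by (simp add: R_def)
  have "real_of_int T = c 0 + (\<Sum>j\<in>{1..n}. c j) - (\<Sum>j\<in>{1..n}. c j - c 0 * real (bnum (Suc n) j))"
  proof -
    have s1: "(\<Sum>j\<in>{1..n}. real_of_int (y j)) = (\<Sum>j\<in>{1..n}. c j - c 0 * real (bnum (Suc n) j))"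
      by (rule sum.cong) (simp_all add: yj)
    have "real_of_int T = real_of_int h - (\<Sum>j\<in>{1..n}. real_of_int (y j))" by (simp add: T_def)
    then show ?thesis unfolding s1 hc hsum .
  qed
  also have "\<dots> = c 0 * (1 + (\<Sum>j\<in>{1..n}. real (bnum (Suc n) j)))"
    by (simp add: sum_subtractf sum_distrib_left[symmetric] algebra_simps)
  also have "\<dots> = c 0 * R" using sum_BB_real[of n] by (simp add: R_def)
  finally have TR: "real_of_int T = c 0 * R" .
  have c0: "0 < c 0" "c 0 < 1" using c by auto
  have "0 < real_of_int T" "real_of_int T < R" using TR c0 R0 by (auto simp: mult_less_cancel_right1)
  then have T: "0 < T" "T < NN n" by (auto simp: R_def)
  define t where "t = nat T"
  have tT: "int t = T" using T by (simp add: t_def)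
  have yd: "y j = - (int t * BB n j div NN n) \<and> int t * BB n j mod NN n \<noteq> 0" if j: "j \<in> {1..n}" for j
  proof -
    have cj: "0 < c j" "c j < 1" using c j by auto
    have "real_of_int (NN n * y j + T * BB n j) = R * c j"
    proof -
      have cjv: "c j = real_of_int (y j) + c 0 * real (bnum (Suc n) j)" using yj[OF j] by simp
      show ?thesis unfolding cjv using TR by (simp add: R_def BB_def algebra_simps)
    qed
    then have "0 < real_of_int (NN n * y j + T * BB n j)" "real_of_int (NN n * y j + T * BB n j) < R"
      using cj R0 by auto
    then have "0 < NN n * y j + T * BB n j" "NN n * y j + T * BB n j < NN n"
      unfolding R_def by (simp_all only: of_int_0_less_iff of_int_less_iff)
    then show ?thesis using intlem[OF NN_pos, of n "y j" "T * BB n j"] tT by simp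
  qed
  have "y = yv n t" using y0 yd by (auto simp: yv_def)
  moreover have "h = hv n t"
  proof -
    have "h = T + (\<Sum>j\<in>{1..n}. y j)" by (simp add: T_def)
    also have "(\<Sum>j\<in>{1..n}. y j) = (\<Sum>j\<in>{1..n}. - (int t * BB n j div NN n))"
      using yd by (intro sum.cong) auto
    finally show ?thesis by (simp add: hv_def tT sum_negf)
  qed
  moreover have "goodt n t" using T tT yd by (auto simp: goodt_def)
  ultimately show "p \<in> (\<lambda>t. (yv n t, hv n t)) ` {t. goodt n t}" unfolding p by (intro image_eqI[of _ _ t]) auto
next
  fix p assume "p \<in> (\<lambda>t. (yv n t, hv n t)) ` {t. goodt n t}"
  then obtain t where p: "p = (yv n t, hv n t)" and g: "goodt n t" by (auto elim!: imageE)
  define R where "R = real_of_int (NN n)"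
  have R0: "R > 0" using NN_pos by (simp add: R_def)
  define c where "c i = (if i = 0 then real t / R else real_of_int (int t * BB n i mod NN n) / R)" for i
  have c: "\<forall>i\<le>n. 0 < c i \<and> c i < 1"
  proof (intro allI impI)
    fix i assume i: "i \<le> n"
    show "0 < c i \<and> c i < 1"
    proof (cases "i = 0")
      case True
      then show ?thesis using g R0 by (auto simp: c_def goodt_def R_def)
    next
      case False
      then have "i \<in> {1..n}" using i by auto
      then have "int t * BB n i mod NN n \<noteq> 0" using g by (auto simp: goodt_def)
      moreover have "0 \<le> int t * BB n i mod NN n" "int t * BB n i mod NN n < NN n" using NN_pos by auto
      ultimately have "0 < real_of_int (int t * BB n i mod NN n)" "real_of_int (int t * BB n i mod NN n) < R"
        by (auto simp: R_def)
      then show ?thesis using False R0 by (auto simp: c_def)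
    qed
  qed
  have ycond: "\<forall>j\<in>{1..n}. real_of_int (yv n t j) = (\<Sum>i\<le>n. c i * real_of_int (factoradic_vertices n i j))"
  proof
    fix j assume j: "j \<in> {1..n}"
    have e: "int t * BB n j = NN n * (int t * BB n j div NN n) + int t * BB n j mod NN n" by simp
    have "R * (c j - c 0 * real (bnum (Suc n) j)) = real_of_int (int t * BB n j mod NN n) - real t * real (bnum (Suc n) j)"
      using j R0 by (simp add: c_def algebra_simps)
    also have "\<dots> = R * real_of_int (- (int t * BB n j div NN n))"
    proof -
      have "real_of_int (int t * BB n j) = R * real_of_int (int t * BB n j div NN n) + real_of_int (int t * BB n j mod NN n)"
        unfolding R_def by (rule real_divmod)
      then show ?thesis by (simp add: BB_def algebra_simps)
    qed
    finally have "R * (c j - c 0 * real (bnum (Suc n) j)) = R * real_of_int (- (int t * BB n j div NN n))" .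
    then have "c j - c 0 * real (bnum (Suc n) j) = real_of_int (- (int t * BB n j div NN n))"
      using R0 by (metis mult_cancel_left less_irrefl)
    then show "real_of_int (yv n t j) = (\<Sum>i\<le>n. c i * real_of_int (factoradic_vertices n i j))"
      using j vsum[OF j] by (simp add: yv_def)
  qed
  have hcond: "real_of_int (hv n t) = (\<Sum>i\<le>n. c i)"
  proof -
    have "R * (\<Sum>i\<le>n. c i) = R * c 0 + (\<Sum>j\<in>{1..n}. R * c j)"
      by (simp add: hsum sum_distrib_left algebra_simps)
    also have "(\<Sum>j\<in>{1..n}. R * c j) = (\<Sum>j\<in>{1..n}. real_of_int (int t * BB n j mod NN n))"
      using R0 by (intro sum.cong) (auto simp: c_def)
    also have "R * c 0 = real t" using R0 by (simp add: c_def)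
    finally have "R * (\<Sum>i\<le>n. c i) = real_of_int (int t + (\<Sum>j\<in>{1..n}. int t * BB n j mod NN n))" by simp
    also have "\<dots> = R * real_of_int (hv n t)" using hv_N[of n t] by (simp add: R_def flip: of_int_mult)
    finally show ?thesis using R0 by simp
  qed
  have y0: "\<forall>j. j \<notin> {1..n} \<longrightarrow> yv n t j = 0" by (simp add: yv_def)
  show "p \<in> par_lattice_points n n (factoradic_vertices n)"
    unfolding par_lattice_points_def p mem_Collect_eq case_prod_conv
    using y0 c ycond hcond by (intro conjI exI[of _ c]) (assumption | rule)+
qed

lemma inj_yh: "inj_on (\<lambda>t. (yv n t, hv n t)) A"
proof (rule inj_onI)
  fix t t' assume "(yv n t, hv n t) = (yv n t', hv n t')"
  then have "yv n t = yv n t'" "hv n t = hv n t'" by auto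
  have "int t = hv n t - (\<Sum>j\<in>{1..n}. yv n t j)" for t
    by (simp add: hv_def yv_def sum_negf)
  then have "int t = int t'" using \<open>yv n t = yv n t'\<close> \<open>hv n t = hv n t'\<close> by metis
  then show "t = t'" by simp
qed

lemma ell_eq: "ell_star n n (factoradic_vertices n) = (\<Sum>t\<in>{t. goodt n t}. monom 1 (nat (hv n t)))"
  unfolding ell_star_def par_eq by (subst sum.reindex[OF inj_yh]) (simp add: comp_def)




lemma prod_cw:
  shows "(\<Prod>s\<in>{1..n}. cw s t) = (if \<exists>s\<in>{1..n}. GG n s t = GG n (Suc s) t then 0
           else monom 1 (card {s\<in>{1..n}. GG n s t < GG n (Suc s) t}))"
proof -
  have "(\<Prod>s\<in>{1..n}. cw s t) = (\<Prod>s\<in>{1..n}. if GG n s t = GG n (Suc s) t then 0 else if GG n s t < GG n (Suc s) t then zz else 1)"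
  proof (rule prod.cong[OF refl])
    fix s assume "s \<in> {1..n}"
    then have "1 \<le> s" "s \<le> n" by auto
    from asc_iff[OF this, of t] show "cw s t = (if GG n s t = GG n (Suc s) t then 0 else if GG n s t < GG n (Suc s) t then zz else 1)"
      unfolding cw_def Let_def by simp
  qed
  also have "\<dots> = (if \<exists>s\<in>{1..n}. GG n s t = GG n (Suc s) t then 0
           else monom 1 (card {s\<in>{1..n}. GG n s t < GG n (Suc s) t}))"
    by (rule prod_if_cnt) simp
  finally show ?thesis .
qed

lemma mod_zero_iff:
  assumes "1 \<le> s" "s \<le> n"
  shows "int t * Bs n s mod int (fact (Suc n)) = 0 \<longleftrightarrow> GG n s t = GG n (Suc s) t"
  using key_mod[OF assms, of t] GG_bounds[of s n t] GG_bounds[of "Suc s" n t] assms by auto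

lemma BB_Bs: "j \<in> {1..n} \<Longrightarrow> BB n j = Bs n (Suc n - j)"
  unfolding BB_def by (rule bnum_Bs) auto

lemma all_rev: "(\<forall>j\<in>{1..n}. P (Suc n - j)) \<longleftrightarrow> (\<forall>s\<in>{1..n}. P s)"
proof
  assume a: "\<forall>j\<in>{1..n}. P (Suc n - j)"
  show "\<forall>s\<in>{1..n}. P s"
  proof
    fix s assume s: "s \<in> {1..n}"
    then have "Suc n - s \<in> {1..n}" "Suc n - (Suc n - s) = s" by auto
    then show "P s" using a by metis
  qed
next
  assume a: "\<forall>s\<in>{1..n}. P s"
  show "\<forall>j\<in>{1..n}. P (Suc n - j)"
  proof
    fix j assume "j \<in> {1..n}"
    then have "Suc n - j \<in> {1..n}" by auto
    then show "P (Suc n - j)" using a by blast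
  qed
qed

lemma GG1: "GG n 1 t = 0" by (simp add: GG_def)
lemma GGtop: "t < fact (Suc n) \<Longrightarrow> GG n (Suc n) t = int t" by (simp add: GG_def del: fact_Suc)

lemma good_lt: "goodt n t \<Longrightarrow> t < fact (Suc n)"
proof -
  assume "goodt n t"
  then have "int t < int (fact (Suc n))" unfolding goodt_def NN_def by blast
  then show ?thesis by (simp only: of_nat_less_iff)
qed

lemma good_iff:
  assumes "t < fact (Suc n)" "1 \<le> n"
  shows "goodt n t \<longleftrightarrow> \<not> (\<exists>s\<in>{1..n}. GG n s t = GG n (Suc s) t)"
proof (cases "t = 0")
  case True
  have "GG n 1 t = GG n (Suc 1) t" using True by (simp add: GG_def)
  then have "\<exists>s\<in>{1..n}. GG n s t = GG n (Suc s) t" using assms by (intro bexI[of _ 1]) auto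
  then show ?thesis using True by (simp add: goodt_def)
next
  case False
  have lt: "int t < NN n" unfolding NN_def using assms(1) by (simp only: of_nat_less_iff)
  have "(\<forall>j\<in>{1..n}. int t * BB n j mod NN n \<noteq> 0) \<longleftrightarrow> (\<forall>j\<in>{1..n}. int t * Bs n (Suc n - j) mod NN n \<noteq> 0)"
    by (simp add: BB_Bs)
  also have "\<dots> \<longleftrightarrow> (\<forall>s\<in>{1..n}. int t * Bs n s mod NN n \<noteq> 0)"
    by (rule all_rev)
  also have "\<dots> \<longleftrightarrow> (\<forall>s\<in>{1..n}. GG n s t \<noteq> GG n (Suc s) t)"
    using mod_zero_iff by (auto simp: NN_def)
  finally show ?thesis using False lt by (auto simp: goodt_def)
qed

lemma hv_card:
  assumes "goodt n t" "1 \<le> n"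
  shows "hv n t = int (card {s\<in>{1..n}. GG n s t < GG n (Suc s) t})"
proof -
  have tN: "t < fact (Suc n)" using assms(1) by (rule good_lt)
  have ne: "\<forall>s\<in>{1..n}. GG n s t \<noteq> GG n (Suc s) t" using good_iff[OF tN assms(2)] assms(1) by auto
  let ?S = "{s\<in>{1..n}. GG n s t < GG n (Suc s) t}"
  have "(\<Sum>j\<in>{1..n}. int t * BB n j mod NN n) = (\<Sum>j\<in>{1..n}. int t * Bs n (Suc n - j) mod NN n)"
    by (rule sum.cong) (auto simp: BB_Bs)
  also have "\<dots> = (\<Sum>s\<in>{1..n}. int t * Bs n s mod NN n)" by (rule reindex_rev)
  also have "\<dots> = (\<Sum>s\<in>{1..n}. (GG n s t - GG n (Suc s) t) + (if GG n s t < GG n (Suc s) t then NN n else 0))"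
  proof (rule sum.cong[OF refl])
    fix s assume s: "s \<in> {1..n}"
    then have "1 \<le> s" "s \<le> n" by auto
    from key_mod[OF this, of t] ne s show "int t * Bs n s mod NN n = GG n s t - GG n (Suc s) t + (if GG n s t < GG n (Suc s) t then NN n else 0)"
      by (auto simp: NN_def)
  qed
  also have "\<dots> = (\<Sum>s\<in>{1..n}. GG n s t - GG n (Suc s) t) + (\<Sum>s\<in>{1..n}. if GG n s t < GG n (Suc s) t then NN n else 0)"
    by (rule sum.distrib)
  also have "(\<Sum>s\<in>{1..n}. GG n s t - GG n (Suc s) t) = - (\<Sum>s\<in>{1..n}. GG n (Suc s) t - GG n s t)"
    by (simp add: sum_negf[symmetric])
  also have "(\<Sum>s\<in>{1..n}. GG n (Suc s) t - GG n s t) = GG n (Suc n) t - GG n 1 t"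
    by (rule sum_Suc_diff) simp
  also have "(\<Sum>s\<in>{1..n}. if GG n s t < GG n (Suc s) t then NN n else 0) = (\<Sum>s\<in>?S. NN n)"
    by (rule sum.inter_filter[symmetric]) simp
  also have "\<dots> = NN n * int (card ?S)" by simp
  finally have "(\<Sum>j\<in>{1..n}. int t * BB n j mod NN n) = - int t + NN n * int (card ?S)"
    by (simp add: GG1[simplified] GGtop[OF tN])
  then have "NN n * hv n t = NN n * int (card ?S)" using hv_N[of n t] by simp
  then show ?thesis using NN_pos[of n] by simp
qed

lemma sum_eq:
  assumes "1 \<le> n"
  shows "(\<Sum>t<fact (Suc n). \<Prod>s\<in>{1..n}. cw s t) = (\<Sum>t\<in>{t. goodt n t}. monom 1 (nat (hv n t)))"
proof -
  have "(\<Sum>t<fact (Suc n). \<Prod>s\<in>{1..n}. cw s t) = (\<Sum>t<fact (Suc n). if goodt n t then monom 1 (nat (hv n t)) else 0)"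
  proof (rule sum.cong[OF refl])
    fix t :: nat assume "t \<in> {..<fact (Suc n)}"
    then have tN: "t < fact (Suc n)" by simp
    show "(\<Prod>s\<in>{1..n}. cw s t) = (if goodt n t then monom 1 (nat (hv n t)) else 0)"
      unfolding prod_cw using good_iff[OF tN assms] hv_card[OF _ assms, of t] by auto
  qed
  also have "\<dots> = (\<Sum>t\<in>{t\<in>{..<fact (Suc n)}. goodt n t}. monom 1 (nat (hv n t)))"
    by (rule sum.inter_filter[symmetric]) simp
  also have "{t\<in>{..<fact (Suc n)}. goodt n t} = {t. goodt n t}"
    using good_lt by auto
  finally show ?thesis .
qed

lemma gpos_final: assumes "1 \<le> n" shows "gpos (Suc n) (ell_star n n (factoradic_vertices n))"
proof -
  have g: "gpos (Suc n) (\<Sum>t<fact (Suc n). \<Prod>s\<in>{1..n}. cw s t)"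
  proof (cases "n = 1")
    case True
    have c: "cw 1 0 = 0" "cw 1 1 = zz" by (simp_all add: cw_def)
    have "(\<Sum>t<fact (Suc 1). \<Prod>s\<in>{1..1}. cw s t) = zz"
      using c by (simp add: lessThan_nat_numeral fact_numeral)
    moreover have "gpos 2 (zz * [:1:])" using gpos_mult_z[OF gpos_const[of 1]] by (simp add: numeral_2_eq_2)
    ultimately show ?thesis using True by (simp add: numeral_2_eq_2)
  next
    case False then show ?thesis using assms main_sum_gpos[of n] by simp
  qed
  then show ?thesis using sum_eq[OF assms] ell_eq[of n] by simp
qed

theorem corollary3p5:
  fixes n :: nat
  assumes "n \<ge> 1"
  shows "\<exists>\<gamma> :: nat \<Rightarrow> real. (\<forall>i. \<gamma> i \<ge> 0) \<and>
           ell_star n n (factoradic_vertices n) =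
             (\<Sum>i\<le>(n + 1) div 2. smult (\<gamma> i) (monom 1 i * [:1, 1:] ^ (n + 1 - 2 * i)))"
  using gpos_final[OF assms] unfolding gpos_def by simp


end
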